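(* Let $n,m\ge1$, $r>0$, and let $\mathbf b_1,\dots,\mathbf b_m\in[0,\infty)^n$ be nonzero vectors with nonnegative entries. Put $D_{ij}=\frac{r}{m}(\mathbf b_i\cdot\mathbf b_j)$ for $i,j=1,\dots,m$. Then the system of equations $$\sum_{j=1}^m D_{kj}\alpha_k\alpha_j=1,\qquad k=1,\dots,m,$$ has at most one solution $(\alpha_1,\dots,\alpha_m)$ with all $\alpha_k>0$. *)

theory Defs
  imports "HOL-Analysis.Analysis"
begin

end

theory Submission
  imports Defs
begin

theorem theorem2:
  fixes m :: nat and r :: real and b :: "nat \<Rightarrow> real ^ 'n"
    and \<alpha> \<beta> :: "nat \<Rightarrow> real"
  assumes "m \<ge> 1" and "r > 0"
    and "\<And>i. i < m \<Longrightarrow> b i \<noteq> 0"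
    and "\<And>i l. i < m \<Longrightarrow> b i $ l \<ge> 0"
    and "\<And>k. k < m \<Longrightarrow> \<alpha> k > 0"
    and "\<And>k. k < m \<Longrightarrow> (\<Sum>j<m. (r / real m) * (b k \<bullet> b j) * \<alpha> k * \<alpha> j) = 1"
    and "\<And>k. k < m \<Longrightarrow> \<beta> k > 0"
    and "\<And>k. k < m \<Longrightarrow> (\<Sum>j<m. (r / real m) * (b k \<bullet> b j) * \<beta> k * \<beta> j) = 1"
  shows "\<forall>k<m. \<alpha> k = \<beta> k"
proof -
  define q where "q = r / real m"
  have q: "q > 0" using assms(1,2) by (simp add: q_def)
  have Sa: "(\<Sum>j<m. (b k \<bullet> b j) * \<alpha> j) = 1 / (q * \<alpha> k)" if k: "k < m" for k
  proof -
    have "(\<Sum>j<m. (r / real m) * (b k \<bullet> b j) * \<alpha> k * \<alpha> j) = (q * \<alpha> k) * (\<Sum>j<m. (b k \<bullet> b j) * \<alpha> j)"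
      by (simp add: q_def sum_distrib_left mult_ac)
    with assms(6)[OF k] have "(q * \<alpha> k) * (\<Sum>j<m. (b k \<bullet> b j) * \<alpha> j) = 1" by simp
    moreover have "q * \<alpha> k \<noteq> 0" using q assms(5)[OF k] by simp
    ultimately show ?thesis by (simp add: field_simps)
  qed
  have Sb: "(\<Sum>j<m. (b k \<bullet> b j) * \<beta> j) = 1 / (q * \<beta> k)" if k: "k < m" for k
  proof -
    have "(\<Sum>j<m. (r / real m) * (b k \<bullet> b j) * \<beta> k * \<beta> j) = (q * \<beta> k) * (\<Sum>j<m. (b k \<bullet> b j) * \<beta> j)"
      by (simp add: q_def sum_distrib_left mult_ac)
    with assms(8)[OF k] have "(q * \<beta> k) * (\<Sum>j<m. (b k \<bullet> b j) * \<beta> j) = 1" by simp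
    moreover have "q * \<beta> k \<noteq> 0" using q assms(7)[OF k] by simp
    ultimately show ?thesis by (simp add: field_simps)
  qed
  define c where "c k = \<alpha> k - \<beta> k" for k
  define v where "v = (\<Sum>k<m. c k *\<^sub>R b k)"
  have "v \<bullet> v = (\<Sum>k<m. c k * (\<Sum>j<m. (b k \<bullet> b j) * c j))"
    unfolding v_def by (simp add: inner_sum_left inner_sum_right sum_distrib_left mult_ac inner_commute)
  also have "\<dots> = (\<Sum>k<m. c k * (1 / (q * \<alpha> k) - 1 / (q * \<beta> k)))"
  proof (rule sum.cong[OF refl])
    fix k assume "k \<in> {..<m}"
    hence k: "k < m" by simp
    have "(\<Sum>j<m. (b k \<bullet> b j) * c j) = (\<Sum>j<m. (b k \<bullet> b j) * \<alpha> j) - (\<Sum>j<m. (b k \<bullet> b j) * \<beta> j)"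
      by (simp add: c_def algebra_simps sum_subtractf)
    then show "c k * (\<Sum>j<m. (b k \<bullet> b j) * c j) = c k * (1 / (q * \<alpha> k) - 1 / (q * \<beta> k))"
      using Sa[OF k] Sb[OF k] by simp
  qed
  also have "\<dots> = (\<Sum>k<m. -((c k)^2) / (q * \<alpha> k * \<beta> k))"
  proof (rule sum.cong[OF refl])
    fix k assume "k \<in> {..<m}"
    hence k: "k < m" by simp
    have "\<alpha> k > 0" "\<beta> k > 0" using assms(5,7) k by auto
    then show "c k * (1 / (q * \<alpha> k) - 1 / (q * \<beta> k)) = -((c k)^2) / (q * \<alpha> k * \<beta> k)"
      using q by (simp add: c_def field_simps power2_eq_square)
  qed
  finally have eq: "v \<bullet> v = (\<Sum>k<m. -((c k)^2) / (q * \<alpha> k * \<beta> k))" .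
  have nn: "\<And>k. k \<in> {..<m} \<Longrightarrow> 0 \<le> (c k)^2 / (q * \<alpha> k * \<beta> k)"
    using q assms(5,7) by (auto intro!: divide_nonneg_pos)
  have "(\<Sum>k<m. (c k)^2 / (q * \<alpha> k * \<beta> k)) = - (v \<bullet> v)"
    using eq by (simp add: sum_negf)
  also have "\<dots> \<le> 0" by simp
  finally have "(\<Sum>k<m. (c k)^2 / (q * \<alpha> k * \<beta> k)) = 0"
    using sum_nonneg[of "{..<m}" "\<lambda>k. (c k)^2 / (q * \<alpha> k * \<beta> k)", OF nn] by linarith
  hence z: "\<forall>k\<in>{..<m}. (c k)^2 / (q * \<alpha> k * \<beta> k) = 0"
    using sum_nonneg_eq_0_iff[of "{..<m}" "\<lambda>k. (c k)^2 / (q * \<alpha> k * \<beta> k)", OF _ nn] by simp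
  show ?thesis
  proof (intro allI impI)
    fix k assume k: "k < m"
    have "\<alpha> k > 0" "\<beta> k > 0" using assms(5,7) k by auto
    with z k q have "c k = 0" by auto
    thus "\<alpha> k = \<beta> k" by (simp add: c_def)
  qed
qed

end
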